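(* Let $\nu$ be a probability distribution on $(0,1)$ whose c.d.f. $F(t)=\int_0^t\nu(\mathrm du)$ belongs to $\mathcal C^\gamma$ for some $\gamma\in(0,2]$. For any integer $M\ge0$, \[ \max_{0\le l\le M+1}\left|F\!\left(\tfrac{l}{M+1}\right)-F^M\!\left(\tfrac{l}{M+1}\right)\right|\le\frac{\|F\|_\gamma}{2^\gamma(M+2)^{\gamma/2}}. \]
   Context: $m^{\alpha,\beta}=\int_0^1a^\alpha(1-a)^\beta\nu(\mathrm da)$ for $\alpha,\beta\in\mathbb Z_+$, and for $u\in[0,1]$, $F^M(u)=\sum_{k=0}^{[(M+1)u]-1}\binom Mk m^{k,M-k}$, where $[\cdot]$ is the integer part and the empty sum is $0$. Hölder spaces: for $\gamma\in(0,1]$, $\mathcal C^\gamma$ is the set of continuous $f:[0,1]\to\mathbb R$ with $\|f\|_\gamma=\sup_{u\ne v}|f(v)-f(u)|/|v-u|^\gamma<\infty$; for $\gamma\in(1,2]$, $\mathcal C^\gamma$ is the set of continuously differentiable $f:[0,1]\to\mathbb R$ with $\|f\|_\gamma=\|f'\|_\infty+\sup_{u\ne v}|f'(v)-f'(u)|/|v-u|^{\gamma-1}<\infty$. *)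

theory Defs
  imports "HOL-Probability.Probability"
begin

definition unit_pairs :: "(real \<times> real) set" where
  "unit_pairs = {(u, v). u \<in> {0..1} \<and> v \<in> {0..1} \<and> u \<noteq> v}"

definition holder_semi :: "real \<Rightarrow> (real \<Rightarrow> real) \<Rightarrow> real" where
  "holder_semi a g = (SUP (u, v)\<in>unit_pairs. \<bar>g v - g u\<bar> / \<bar>v - u\<bar> powr a)"

definition holder_bdd :: "real \<Rightarrow> (real \<Rightarrow> real) \<Rightarrow> bool" where
  "holder_bdd a g \<longleftrightarrow> bdd_above ((\<lambda>(u, v). \<bar>g v - g u\<bar> / \<bar>v - u\<bar> powr a) ` unit_pairs)"

definition C1_on_unit :: "(real \<Rightarrow> real) \<Rightarrow> (real \<Rightarrow> real) \<Rightarrow> bool" where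
  "C1_on_unit f f' \<longleftrightarrow>
     (\<forall>x\<in>{0..1}. (f has_real_derivative f' x) (at x within {0..1})) \<and> continuous_on {0..1} f'"

definition holder_space :: "real \<Rightarrow> (real \<Rightarrow> real) \<Rightarrow> bool" where
  "holder_space \<gamma> f \<longleftrightarrow>
     (if \<gamma> \<le> 1 then continuous_on {0..1} f \<and> holder_bdd \<gamma> f
      else (\<exists>f'. C1_on_unit f f' \<and> holder_bdd (\<gamma> - 1) f'))"

text \<open>The Hoelder norm; for gamma > 1 the derivative on [0,1] is unique, chosen by SOME.\<close>
definition holder_norm :: "real \<Rightarrow> (real \<Rightarrow> real) \<Rightarrow> real" where
  "holder_norm \<gamma> f =
     (if \<gamma> \<le> 1 then holder_semi \<gamma> f
      else (let f' = (SOME f'. C1_on_unit f f')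
            in (SUP x\<in>{0..1}. \<bar>f' x\<bar>) + holder_semi (\<gamma> - 1) f'))"

text \<open>c.d.f. F(t) = nu((-inf,t]) (= nu((0,t]) since nu lives on (0,1)).\<close>
definition cdf_of :: "real measure \<Rightarrow> real \<Rightarrow> real" where
  "cdf_of \<nu> t = measure \<nu> {..t}"

definition mom :: "real measure \<Rightarrow> nat \<Rightarrow> nat \<Rightarrow> real" where
  "mom \<nu> \<alpha> \<beta> = (\<integral>a. a ^ \<alpha> * (1 - a) ^ \<beta> \<partial>\<nu>)"

definition FM :: "real measure \<Rightarrow> nat \<Rightarrow> real \<Rightarrow> real" where
  "FM \<nu> M u = (\<Sum>k<nat \<lfloor>(real M + 1) * u\<rfloor>. real (M choose k) * mom \<nu> k (M - k))"

end

theory Submission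
  imports Defs
begin


definition GG :: "nat \<Rightarrow> nat \<Rightarrow> real \<Rightarrow> real" where
  "GG M l a = (\<Sum>k<l. real (M choose k) * (a^k * (1-a)^(M-k)))"
definition BB :: "nat \<Rightarrow> nat \<Rightarrow> real \<Rightarrow> real" where
  "BB M l u = real M * real ((M-1) choose (l-1)) * u^(l-1) * (1-u)^(M-l)"

lemma binom_id1: "0 < n \<Longrightarrow> real (M choose n) * real n = real M * real ((M-1) choose (n-1))"
proof -
  assume "0 < n"
  then have "n * (M choose n) = M * ((M-1) choose (n-1))" by (rule times_binomial_minus1_eq)
  then show ?thesis by (metis mult.commute of_nat_mult)
qed

lemma binom_id2: "real (M choose n) * real (M - n) = real M * real ((M-1) choose n)"
proof -
  have "(M - n) * (M choose n) = M * ((M-1) choose n)" by (rule binomial_absorb_comp)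
  then show ?thesis by (metis mult.commute of_nat_mult)
qed

lemma GG_deriv: "1 \<le> l \<Longrightarrow> l \<le> M \<Longrightarrow> (GG M l has_real_derivative - BB M l a) (at a)"
proof (induct l rule: nat_induct_at_least)
  case base
  have "GG M 1 = (\<lambda>a. (1-a)^M)" by (auto simp: GG_def)
  moreover have "((\<lambda>a. (1-a)^M) has_real_derivative - BB M 1 a) (at a)"
    by (auto intro!: derivative_eq_intros simp: BB_def)
  ultimately show ?case by simp
next
  case (Suc n)
  have IH: "(GG M n has_real_derivative - BB M n a) (at a)" using Suc by simp
  obtain j where nj: "n = Suc j" using Suc by (cases n) auto
  obtain r where Mr: "M - n = Suc r" using Suc by (metis Suc_diff_Suc Suc_le_eq)
  have Mr2: "M - Suc n = r" using Mr by simp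
  have h0: "((\<lambda>a::real. a^(Suc j) * (1-a)^(Suc r)) has_real_derivative (real (Suc j) * a^j * (1-a)^(Suc r) - real (Suc r) * a^(Suc j) * (1-a)^r)) (at a)"
    apply (rule derivative_eq_intros refl)+
    apply (simp add: algebra_simps)
    done
  have h: "((\<lambda>a. real (M choose n) * (a^n * (1-a)^(M-n))) has_real_derivative
      real (M choose n) * (real n * a^j * (1-a)^(Suc r) - real (Suc r) * a^n * (1-a)^r)) (at a)"
    unfolding Mr unfolding nj by (rule DERIV_cmult[OF h0])
  have e: "GG M (Suc n) = (\<lambda>a. GG M n a + real (M choose n) * (a^n * (1-a)^(M-n)))"
    by (auto simp: GG_def)
  have b1: "BB M n a = real M * real ((M-1) choose j) * a^j * (1-a)^(Suc r)"
    unfolding BB_def nj using Mr nj by simp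
  have b2: "BB M (Suc n) a = real M * real ((M-1) choose n) * a^n * (1-a)^r"
    unfolding BB_def using Mr2 by simp
  have i1: "real (M choose n) * real n = real M * real ((M-1) choose j)"
    using binom_id1[of n M] nj by simp
  have i2: "real (M choose n) * real (Suc r) = real M * real ((M-1) choose n)"
    using binom_id2[of M n] Mr by simp
  have "real (M choose n) * (real n * a^j * (1-a)^(Suc r) - real (Suc r) * a^n * (1-a)^r)
      = (real (M choose n) * real n) * a^j * (1-a)^(Suc r) - (real (M choose n) * real (Suc r)) * a^n * (1-a)^r"
    by (simp only: right_diff_distrib mult.assoc)
  also have "\<dots> = BB M n a - BB M (Suc n) a" unfolding i1 i2 b1 b2 ..
  finally have fin: "- BB M n a + real (M choose n) * (real n * a^j * (1-a)^(Suc r) - real (Suc r) * a^n * (1-a)^r)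
      = - BB M (Suc n) a" by simp
  have "((\<lambda>a. GG M n a + real (M choose n) * (a^n * (1-a)^(M-n))) has_real_derivative - BB M n a + real (M choose n) * (real n * a^j * (1-a)^(Suc r) - real (Suc r) * a^n * (1-a)^r)) (at a)"
    by (rule DERIV_add[OF IH h])
  then show ?case unfolding e fin .
qed

lemma GG_one: "l \<le> M \<Longrightarrow> GG M l 1 = 0"
  by (auto simp: GG_def intro!: sum.neutral)

lemma GG_zero: "1 \<le> l \<Longrightarrow> GG M l 0 = 1"
proof -
  assume "1 \<le> l"
  then obtain j where "l = Suc j" by (cases l) auto
  then show ?thesis unfolding GG_def sum.lessThan_Suc_shift by simp
qed

lemma BB_int: assumes "1 \<le> l" "l \<le> M" "0 \<le> a" "a \<le> 1"
  shows "(BB M l has_integral GG M l a) {a..1}"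
proof -
  have "((\<lambda>u. - BB M l u) has_integral (GG M l 1 - GG M l a)) {a..1}"
  proof (rule fundamental_theorem_of_calculus[where f="GG M l"])
    show "a \<le> 1" using assms by simp
    fix x assume "x \<in> {a..1}"
    show "(GG M l has_vector_derivative - BB M l x) (at x within {a..1})"
      unfolding has_real_derivative_iff_has_vector_derivative[symmetric]
      by (rule has_field_derivative_at_within[OF GG_deriv[OF assms(1,2)]])
  qed
  then have "((\<lambda>u. - BB M l u) has_integral (- GG M l a)) {a..1}" using GG_one assms by simp
  then have "((\<lambda>u. - (- BB M l u)) has_integral (- (- GG M l a))) {a..1}" by (rule has_integral_neg)
  then show ?thesis by simp
qed

lemma BB_int01: assumes "1 \<le> l" "l \<le> M" shows "(BB M l has_integral 1) {0..1}"
  using BB_int[OF assms, of 0] GG_zero assms by simp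

lemma BB_nonneg: "0 \<le> u \<Longrightarrow> u \<le> 1 \<Longrightarrow> 0 \<le> BB M l u"
  by (simp add: BB_def)

lemma div_mult_cancel_aux: "(c::real) \<noteq> 0 \<Longrightarrow> a / c * (c * X) = a * X"
  by simp

lemma BB_shift: assumes "1 \<le> l" "l \<le> M"
  shows "u * BB M l u = real l / (real M + 1) * BB (Suc M) (Suc l) u"
proof -
  obtain j where lj: "l = Suc j" using assms by (cases l) auto
  have i: "real M * real ((M-1) choose j) = real l * real (M choose l)"
    using binom_id1[of l M] assms lj by (simp add: mult.commute)
  have "u * BB M l u = (real M * real ((M-1) choose j)) * (u^l * (1-u)^(M-l))"
    unfolding BB_def lj by (simp add: mult_ac)
  also have "\<dots> = real l * (real (M choose l) * (u^l * (1-u)^(M-l)))"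
    unfolding i by simp
  also have "\<dots> = real l / (real M + 1) * ((real M + 1) * (real (M choose l) * (u^l * (1-u)^(M-l))))"
    by (rule div_mult_cancel_aux[symmetric]) simp
  also have "\<dots> = real l / (real M + 1) * BB (Suc M) (Suc l) u"
  proof -
    have "BB (Suc M) (Suc l) u = (real M + 1) * (real (M choose l) * (u^l * (1-u)^(M-l)))"
      by (simp add: BB_def algebra_simps)
    then show ?thesis by simp
  qed
  finally show ?thesis .
qed

lemma young_p: fixes y p :: real assumes "0 \<le> y" "0 < p" "p \<le> 1" shows "y powr p \<le> p * y + (1 - p)"
proof (cases "y = 0")
  case True
  then have "y powr p = 0" "p * y = 0" by simp_all
  then show ?thesis using assms by linarith
next
  case False
  then have "y powr p * 1 powr (1 - p) \<le> p * y + (1 - p) * 1"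
    using assms by (intro Youngs_inequality_0) auto
  then show ?thesis by simp
qed

lemma powr_sq: assumes "0 \<le> (x::real)" shows "x powr g = (x^2) powr (g/2)"
proof (cases "x = 0")
  case True then show ?thesis by simp
next
  case False
  have e: "(x powr 2) powr (g/2) = x powr g" by (simp add: powr_powr)
  have "x powr 2 = x^2" using powr_realpow[of x 2] assms False by simp
  then show ?thesis using e by metis
qed

lemma pt_bound: fixes W \<gamma> u t :: real assumes "0 < W" "0 < \<gamma>" "\<gamma> \<le> 2"
  shows "\<bar>u - t\<bar> powr \<gamma> \<le> W powr (\<gamma>/2) * ((\<gamma>/2) * (u-t)^2 / W + (1 - \<gamma>/2))"
proof -
  define y where "y = (u-t)^2 / W"
  have y0: "0 \<le> y" using assms by (simp add: y_def)
  have "\<bar>u - t\<bar> powr \<gamma> = ((u-t)^2) powr (\<gamma>/2)" using powr_sq[of "\<bar>u-t\<bar>" \<gamma>] by simp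
  also have "(u-t)^2 = y * W" using assms by (simp add: y_def)
  also have "(y * W) powr (\<gamma>/2) = y powr (\<gamma>/2) * W powr (\<gamma>/2)"
    using y0 assms by (simp add: powr_mult)
  also have "\<dots> \<le> ((\<gamma>/2) * y + (1 - \<gamma>/2)) * W powr (\<gamma>/2)"
    by (rule mult_right_mono[OF young_p]) (use y0 assms in auto)
  finally show ?thesis by (simp add: y_def mult.commute)
qed

lemma BB_cont: "continuous_on S (BB M l)"
  unfolding BB_def by (intro continuous_intros)

lemma Vbound: "(m::real) \<ge> 1 \<Longrightarrow> 0 \<le> l \<Longrightarrow> l/m * ((l+1)/(m+1)) - (l/m)^2 \<le> 1/(4*(m+1))"
proof -
  assume m: "m \<ge> 1" and l: "0 \<le> l"
  have m0: "m \<noteq> 0" "m + 1 \<noteq> 0" using m by auto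
  have "l/m * ((l+1)/(m+1)) = l*(l+1)*m/(m^2*(m+1))" using m0 by (simp add: power2_eq_square)
  moreover have "(l/m)^2 = l*l*(m+1)/(m^2*(m+1))" using m0 by (simp add: power2_eq_square)
  ultimately have "l/m * ((l+1)/(m+1)) - (l/m)^2 = (l*(l+1)*m - l*l*(m+1))/(m^2*(m+1))"
    by (simp add: diff_divide_distrib)
  also have "l*(l+1)*m - l*l*(m+1) = l*(m-l)" by (simp add: algebra_simps)
  finally have e: "l/m * ((l+1)/(m+1)) - (l/m)^2 = l*(m - l)/(m^2*(m+1))" .
  have "l*(m-l)/(m^2*(m+1)) \<le> (m^2/4)/(m^2*(m+1))"
    apply (rule divide_right_mono)
    subgoal proof -
      have "m^2/4 - l*(m-l) = (m - 2*l)^2/4" by (simp add: power2_eq_square algebra_simps)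
      moreover have "0 \<le> (m - 2*l)^2/4" by simp
      ultimately show ?thesis by linarith
    qed
    using m by simp
  also have "\<dots> = 1/(4*(m+1))" using m0 by (simp add: power2_eq_square)
  finally show ?thesis using e by simp
qed

lemma core:
  fixes R :: "real \<Rightarrow> real"
  assumes l: "1 \<le> l" "l \<le> M" and g: "0 < \<gamma>" "\<gamma> \<le> 2" and K: "0 \<le> K"
    and Rc: "continuous_on {0..1} R"
    and Rb: "\<And>u. u \<in> {0..1} \<Longrightarrow> \<bar>R u\<bar> \<le> K * \<bar>u - real l/(real M+1)\<bar> powr \<gamma>"
  shows "\<bar>integral {0..1} (\<lambda>u. BB M l u * R u)\<bar> \<le> K / (2 powr \<gamma> * (real M + 2) powr (\<gamma>/2))"
proof -
  define t where "t = real l / (real M + 1)"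
  define p where "p = \<gamma>/2"
  define W where "W = 1 / (4 * (real M + 2))"
  define s2 where "s2 = t * ((real l + 1) / (real M + 2))"
  have W0: "0 < W" by (simp add: W_def)
  have h0: "(BB M l has_integral 1) {0..1}" by (rule BB_int01[OF l])
  have h1: "((\<lambda>u. u * BB M l u) has_integral t) {0..1}"
  proof -
    have "((\<lambda>u. t * BB (Suc M) (Suc l) u) has_integral t * 1) {0..1}"
      by (rule has_integral_mult_right[OF BB_int01]) (use l in auto)
    moreover have "(\<lambda>u. u * BB M l u) = (\<lambda>u. t * BB (Suc M) (Suc l) u)"
      using BB_shift[OF l] t_def by auto
    ultimately show ?thesis by simp
  qed
  have h2: "((\<lambda>u. u^2 * BB M l u) has_integral s2) {0..1}"
  proof -
    have "((\<lambda>u. s2 * BB (Suc (Suc M)) (Suc (Suc l)) u) has_integral s2 * 1) {0..1}"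
      by (rule has_integral_mult_right[OF BB_int01]) (use l in auto)
    moreover have "(\<lambda>u. u^2 * BB M l u) = (\<lambda>u. s2 * BB (Suc (Suc M)) (Suc (Suc l)) u)"
    proof
      fix u
      have "u^2 * BB M l u = u * (u * BB M l u)" by (simp add: power2_eq_square)
      also have "\<dots> = t * (u * BB (Suc M) (Suc l) u)" using BB_shift[OF l] t_def by simp
      also have "\<dots> = t * (real (Suc l) / (real (Suc M) + 1) * BB (Suc (Suc M)) (Suc (Suc l)) u)"
        using BB_shift[of "Suc l" "Suc M" u] l by simp
      also have "real (Suc l) / (real (Suc M) + 1) = (real l + 1) / (real M + 2)" by (simp add: add.commute)
      finally show "u^2 * BB M l u = s2 * BB (Suc (Suc M)) (Suc (Suc l)) u"
        by (simp add: s2_def)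
    qed
    ultimately show ?thesis by simp
  qed
  have hV: "((\<lambda>u. (u - t)^2 * BB M l u) has_integral (s2 - t^2)) {0..1}"
  proof -
    have "((\<lambda>u. u^2 * BB M l u - (2*t) * (u * BB M l u) + t^2 * BB M l u) has_integral (s2 - (2*t) * t + t^2 * 1)) {0..1}"
      by (intro has_integral_add has_integral_diff has_integral_mult_right h0 h1 h2)
    moreover have "(\<lambda>u. u^2 * BB M l u - (2*t) * (u * BB M l u) + t^2 * BB M l u) = (\<lambda>u. (u - t)^2 * BB M l u)"
      by (rule ext) (simp add: power2_eq_square algebra_simps)
    ultimately show ?thesis by (simp add: power2_eq_square)
  qed
  have Vle: "s2 - t^2 \<le> W"
  proof -
    have v: "real l/(real M+1) * ((real l+1)/((real M+1)+1)) - (real l/(real M+1))^2 \<le> 1/(4*((real M+1)+1))"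
      by (rule Vbound) auto
    have "(real M+1)+1 = real M + 2" by simp
    then have v2: "real l/(real M+1) * ((real l+1)/(real M + 2)) - (real l/(real M+1))^2 \<le> 1/(4*(real M + 2))"
      using v by (simp only:)
    show ?thesis using v2 by (simp only: t_def s2_def W_def)
  qed
  define g where "g u = BB M l u * (K * (W powr p * (p * (u-t)^2 / W + (1 - p))))" for u
  have hg: "(g has_integral ((K * W powr p * (p/W)) * (s2 - t^2) + (K * W powr p * (1-p)) * 1)) {0..1}"
  proof -
    have "((\<lambda>u. (K * W powr p * (p/W)) * ((u - t)^2 * BB M l u) + (K * W powr p * (1-p)) * BB M l u)
       has_integral ((K * W powr p * (p/W)) * (s2 - t^2) + (K * W powr p * (1-p)) * 1)) {0..1}"
      by (intro has_integral_add has_integral_mult_right hV h0)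
    moreover have "(\<lambda>u. (K * W powr p * (p/W)) * ((u - t)^2 * BB M l u) + (K * W powr p * (1-p)) * BB M l u) = g"
      by (rule ext) (simp add: g_def algebra_simps)
    ultimately show ?thesis by simp
  qed
  have KW: "0 \<le> K * W powr p" using K by simp
  have p0: "0 < p" "p \<le> 1" using g by (auto simp: p_def)
  have "(p/W) * (s2 - t^2) \<le> (p/W) * W"
    by (rule mult_left_mono[OF Vle]) (use p0 W0 in simp)
  also have "\<dots> = p" using W0 by simp
  finally have pv: "(p/W) * (s2 - t^2) \<le> p" .
  have Ig: "integral {0..1} g \<le> K * W powr p"
  proof -
    have "integral {0..1} g = (K * W powr p * (p/W)) * (s2 - t^2) + (K * W powr p * (1-p)) * 1"
      by (rule integral_unique[OF hg])
    also have "\<dots> = K * W powr p * ((p/W) * (s2 - t^2) + (1 - p))"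
      by (simp only: mult_1_right distrib_left mult.assoc)
    also have "\<dots> \<le> K * W powr p * (p + (1 - p))"
      by (rule mult_left_mono[OF _ KW]) (use pv in simp)
    finally show ?thesis by simp
  qed
  have Wp: "W powr p = 1 / (2 powr \<gamma> * (real M + 2) powr (\<gamma>/2))"
  proof -
    have "W powr p = 1 / ((4 * (real M + 2)) powr p)" by (simp add: W_def powr_divide)
    also have "(4 * (real M + 2)) powr p = 4 powr p * (real M + 2) powr p" by (rule powr_mult)
    also have "(4::real) powr p = 2 powr \<gamma>"
    proof -
      have a: "((2::real) powr 2) powr p = 2 powr (2 * p)" by (rule powr_powr)
      have b: "(2::real) powr 2 = 4" by simp
      have "(4::real) powr p = 2 powr (2 * p)" using a unfolding b .
      then show ?thesis by (simp add: p_def)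
    qed
    finally show ?thesis by (simp add: p_def)
  qed
  have "\<bar>integral {0..1} (\<lambda>u. BB M l u * R u)\<bar> \<le> integral {0..1} g"
  proof -
    have "norm (integral {0..1} (\<lambda>u. BB M l u * R u)) \<le> integral {0..1} g"
    proof (rule integral_norm_bound_integral)
      show "(\<lambda>u. BB M l u * R u) integrable_on {0..1}"
        by (rule integrable_continuous_interval, rule continuous_on_mult[OF BB_cont Rc])
      show "g integrable_on {0..1}" by (rule has_integral_integrable[OF hg])
      fix u :: real assume u: "u \<in> {0..1}"
      have B0: "0 \<le> BB M l u" using u by (simp add: BB_nonneg)
      have pb: "\<bar>u-t\<bar> powr \<gamma> \<le> W powr p * (p*(u-t)^2/W + (1-p))"
        using pt_bound[OF W0 g, of u t] unfolding p_def .
      have "norm (BB M l u * R u) = BB M l u * \<bar>R u\<bar>" using B0 by (simp add: abs_mult)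
      also have "\<dots> \<le> BB M l u * (K * \<bar>u - t\<bar> powr \<gamma>)"
        by (rule mult_left_mono[OF _ B0]) (use Rb[OF u] t_def in simp)
      also have "\<dots> \<le> g u" unfolding g_def
        by (intro mult_left_mono[OF _ B0] mult_left_mono[OF pb K])
      finally show "norm (BB M l u * R u) \<le> g u" .
    qed
    then show ?thesis by simp
  qed
  also have "\<dots> \<le> K * W powr p" by (rule Ig)
  also have "\<dots> = K / (2 powr \<gamma> * (real M + 2) powr (\<gamma>/2))" using Wp by simp
  finally show ?thesis .
qed



lemma GG_nonneg: "0 \<le> a \<Longrightarrow> a \<le> 1 \<Longrightarrow> 0 \<le> GG M l a"
  unfolding GG_def by (intro sum_nonneg mult_nonneg_nonneg) auto

lemma FM_eq:
  assumes P: "prob_space \<nu>" and S: "sets \<nu> = sets borel" and m1: "measure \<nu> {0<..<1} = 1"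
    and l: "1 \<le> l" "l \<le> M" and Fc: "continuous_on {0..1} (cdf_of \<nu>)"
  shows "FM \<nu> M (real l / (real M + 1)) = integral {0..1} (\<lambda>u. BB M l u * cdf_of \<nu> u)"
proof -
  interpret prob_space \<nu> by (rule P)
  have Mn: "real M + 1 \<noteq> 0" by simp
  have fl: "nat \<lfloor>(real M + 1) * (real l / (real M + 1))\<rfloor> = l" using Mn by simp
  have FMs: "FM \<nu> M (real l/(real M+1)) = (\<Sum>k<l. real (M choose k) * mom \<nu> k (M-k))"
    unfolding FM_def fl ..
  have AE01: "AE a in \<nu>. a \<in> {0<..<1}" by (rule AE_prob_1[OF m1])
  have meq: "borel_measurable \<nu> = borel_measurable borel" by (rule measurable_cong_sets[OF S refl])
  have int_k: "integrable \<nu> (\<lambda>a. a^k * (1-a)^(M-k))" for k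
  proof (rule integrable_const_bound[where B=1])
    show "AE a in \<nu>. norm (a^k*(1-a)^(M-k)) \<le> 1"
      using AE01
    proof eventually_elim
      fix a :: real assume a: "a \<in> {0<..<1}"
      have "a^k \<le> 1" "(1-a)^(M-k) \<le> 1" "0 \<le> a^k" "0 \<le> (1-a)^(M-k)" using a by (auto intro: power_le_one)
      then have "a^k*(1-a)^(M-k) \<le> 1" "0 \<le> a^k*(1-a)^(M-k)" by (auto intro: mult_le_one)
      then show "norm (a^k*(1-a)^(M-k)) \<le> 1" by simp
    qed
    show "(\<lambda>a. a^k * (1-a)^(M-k)) \<in> borel_measurable \<nu>" unfolding meq by measurable
  qed
  have intG: "integrable \<nu> (GG M l)"
    unfolding GG_def by (intro Bochner_Integration.integrable_sum integrable_mult_right int_k)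
  have FMG: "FM \<nu> M (real l/(real M+1)) = integral\<^sup>L \<nu> (GG M l)"
    unfolding FMs GG_def mom_def by (simp add: int_k)
  define f where "f a u = ennreal (if 0 \<le> u \<and> u \<le> 1 \<and> a \<le> u then BB M l u else 0)" for a u :: real
  have fm: "case_prod f \<in> borel_measurable (\<nu> \<Otimes>\<^sub>M lborel)"
  proof -
    have "sets (\<nu> \<Otimes>\<^sub>M lborel) = sets (borel \<Otimes>\<^sub>M (borel :: real measure))"
      by (rule sets_pair_measure_cong) (simp_all add: S)
    then have eq: "borel_measurable (\<nu> \<Otimes>\<^sub>M lborel) = borel_measurable (borel \<Otimes>\<^sub>M (borel :: real measure))"
      by (rule measurable_cong_sets) simp
    show ?thesis unfolding eq unfolding f_def BB_def by measurable
  qed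
  have PS: "pair_sigma_finite \<nu> lborel"
    by (simp add: pair_sigma_finite_def sigma_finite_measure_axioms lborel.sigma_finite_measure_axioms)
  have Fub: "(\<integral>\<^sup>+u. (\<integral>\<^sup>+a. f a u \<partial>\<nu>) \<partial>lborel) = (\<integral>\<^sup>+a. (\<integral>\<^sup>+u. f a u \<partial>lborel) \<partial>\<nu>)"
    by (rule pair_sigma_finite.Fubini'[OF PS fm])
  have inner1: "(\<integral>\<^sup>+a. f a u \<partial>\<nu>) = ennreal (BB M l u * cdf_of \<nu> u) * indicator {0..1} u" for u
  proof -
    define c where "c = (if 0 \<le> u \<and> u \<le> 1 then BB M l u else 0)"
    have c0: "0 \<le> c" by (simp add: c_def BB_nonneg)
    have "(\<integral>\<^sup>+a. f a u \<partial>\<nu>) = (\<integral>\<^sup>+a. ennreal c * indicator {..u} a \<partial>\<nu>)"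
      by (rule nn_integral_cong) (auto simp: f_def c_def split: split_indicator)
    also have "\<dots> = ennreal c * emeasure \<nu> {..u}"
      by (rule nn_integral_cmult_indicator) (simp add: S)
    also have "\<dots> = ennreal c * ennreal (cdf_of \<nu> u)" by (simp add: emeasure_eq_measure cdf_of_def)
    also have "\<dots> = ennreal (BB M l u * cdf_of \<nu> u) * indicator {0..1} u"
      using c0 by (auto simp: c_def ennreal_mult[symmetric] cdf_of_def split: split_indicator)
    finally show ?thesis .
  qed
  have hI: "((\<lambda>u. BB M l u * cdf_of \<nu> u) has_integral integral {0..1} (\<lambda>u. BB M l u * cdf_of \<nu> u)) {0..1}"
    by (rule integrable_integral[OF integrable_continuous_interval[OF continuous_on_mult[OF BB_cont Fc]]])
  have LHS: "(\<integral>\<^sup>+u. (\<integral>\<^sup>+a. f a u \<partial>\<nu>) \<partial>lborel) = ennreal (integral {0..1} (\<lambda>u. BB M l u * cdf_of \<nu> u))"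
    unfolding inner1
    by (rule nn_integral_has_integral_lebesgue'[OF _ hI]) (simp add: BB_nonneg cdf_of_def)
  have inner2: "(\<integral>\<^sup>+u. f a u \<partial>lborel) = ennreal (GG M l a)" if a: "a \<in> {0<..<1}" for a
  proof -
    have "(\<integral>\<^sup>+u. f a u \<partial>lborel) = (\<integral>\<^sup>+u. ennreal (BB M l u) * indicator {a..1} u \<partial>lborel)"
      by (rule nn_integral_cong) (use a in \<open>auto simp: f_def split: split_indicator\<close>)
    also have "\<dots> = ennreal (GG M l a)"
      by (rule nn_integral_has_integral_lebesgue'[OF _ BB_int[OF l]]) (use a in \<open>auto intro: BB_nonneg\<close>)
    finally show ?thesis .
  qed
  have AEG: "AE a in \<nu>. 0 \<le> GG M l a" using AE01 by eventually_elim (auto intro: GG_nonneg)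
  have RHS: "(\<integral>\<^sup>+a. (\<integral>\<^sup>+u. f a u \<partial>lborel) \<partial>\<nu>) = ennreal (integral\<^sup>L \<nu> (GG M l))"
  proof -
    have "(\<integral>\<^sup>+a. (\<integral>\<^sup>+u. f a u \<partial>lborel) \<partial>\<nu>) = (\<integral>\<^sup>+a. ennreal (GG M l a) \<partial>\<nu>)"
    proof (rule nn_integral_cong_AE)
      show "AE a in \<nu>. (\<integral>\<^sup>+u. f a u \<partial>lborel) = ennreal (GG M l a)"
        using AE01 by eventually_elim (rule inner2)
    qed
    also have "\<dots> = ennreal (integral\<^sup>L \<nu> (GG M l))"
      by (rule nn_integral_eq_integral[OF intG AEG])
    finally show ?thesis .
  qed
  have nn1: "0 \<le> integral\<^sup>L \<nu> (GG M l)"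
    by (rule integral_nonneg_AE[OF AEG])
  have nn2: "0 \<le> integral {0..1} (\<lambda>u. BB M l u * cdf_of \<nu> u)"
    by (rule integral_nonneg[OF has_integral_integrable[OF hI]]) (simp add: BB_nonneg cdf_of_def)
  have "ennreal (integral\<^sup>L \<nu> (GG M l)) = ennreal (integral {0..1} (\<lambda>u. BB M l u * cdf_of \<nu> u))"
    using Fub LHS RHS by simp
  then have "integral\<^sup>L \<nu> (GG M l) = integral {0..1} (\<lambda>u. BB M l u * cdf_of \<nu> u)"
    using nn1 nn2 by simp
  then show ?thesis using FMG by simp
qed



lemma holder_le:
  assumes hb: "holder_bdd a g" and u: "u \<in> {0..1}" and v: "v \<in> {0..1}"
  shows "\<bar>g v - g u\<bar> \<le> holder_semi a g * \<bar>v - u\<bar> powr a"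
proof (cases "u = v")
  case True then show ?thesis by simp
next
  case False
  have mem: "(u, v) \<in> unit_pairs" using u v False by (simp add: unit_pairs_def)
  have "(\<lambda>(u, v). \<bar>g v - g u\<bar> / \<bar>v - u\<bar> powr a) (u, v) \<le> holder_semi a g"
    unfolding holder_semi_def by (rule cSUP_upper[OF mem]) (use hb in \<open>simp add: holder_bdd_def\<close>)
  then have "\<bar>g v - g u\<bar> / \<bar>v - u\<bar> powr a \<le> holder_semi a g" by simp
  moreover have "0 < \<bar>v - u\<bar> powr a" using False by simp
  ultimately show ?thesis by (simp add: divide_le_eq)
qed

lemma semi_nonneg: assumes hb: "holder_bdd a g" shows "0 \<le> holder_semi a g"
proof -
  have mem: "(0, 1) \<in> unit_pairs" by (simp add: unit_pairs_def)
  show ?thesis unfolding holder_semi_def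
    by (rule cSUP_upper2[OF _ mem]) (use hb in \<open>simp_all add: holder_bdd_def\<close>)
qed

lemma taylor1:
  fixes F D :: "real \<Rightarrow> real"
  assumes D: "\<And>x. x \<in> {0..1} \<Longrightarrow> (F has_real_derivative D x) (at x within {0..1})"
    and hb: "holder_bdd a D" and a: "0 < a" and u: "u \<in> {0..1}" and t: "t \<in> {0..1}"
  shows "\<bar>F u - F t - D t * (u - t)\<bar> \<le> holder_semi a D * \<bar>u - t\<bar> powr (1 + a)"
proof -
  have mvt: "\<exists>\<xi>\<in>{x..y}. F y - F x = D \<xi> * (y - x)" if xy: "x \<le> y" "0 \<le> x" "y \<le> 1" for x y
  proof -
    have "\<exists>\<xi>\<in>{x..y}. F y - F x = (*) (D \<xi>) (y - x)"
    proof (rule mvt_very_simple[OF xy(1)])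
      fix z assume z: "x \<le> z" "z \<le> y"
      have "(F has_real_derivative D z) (at z within {x..y})"
        by (rule has_field_derivative_subset[OF D]) (use z xy in auto)
      then show "(F has_derivative (*) (D z)) (at z within {x..y})"
        by (simp add: has_field_derivative_def)
    qed
    then show ?thesis by simp
  qed
  obtain \<xi> where \<xi>: "\<xi> \<in> {0..1}" "\<bar>\<xi> - t\<bar> \<le> \<bar>u - t\<bar>" "F u - F t = D \<xi> * (u - t)"
  proof (cases "t \<le> u")
    case True
    then obtain \<xi> where x: "\<xi> \<in> {t..u}" "F u - F t = D \<xi> * (u - t)" using mvt[of t u] t u by auto
    show ?thesis by (rule that[of \<xi>]) (use x t u True in auto)
  next
    case False
    then obtain \<xi> where x: "\<xi> \<in> {u..t}" "F t - F u = D \<xi> * (t - u)" using mvt[of u t] t u by auto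
    then have "F u - F t = D \<xi> * (u - t)" by (simp add: algebra_simps)
    show ?thesis by (rule that[of \<xi>]) (use x t u False \<open>F u - F t = D \<xi> * (u - t)\<close> in auto)
  qed
  have "\<bar>F u - F t - D t * (u - t)\<bar> = \<bar>D \<xi> - D t\<bar> * \<bar>u - t\<bar>"
    using \<xi>(3) by (simp add: abs_mult[symmetric] algebra_simps)
  also have "\<dots> \<le> (holder_semi a D * \<bar>\<xi> - t\<bar> powr a) * \<bar>u - t\<bar>"
    by (rule mult_right_mono[OF holder_le[OF hb t \<xi>(1)]]) simp
  also have "\<dots> \<le> (holder_semi a D * \<bar>u - t\<bar> powr a) * \<bar>u - t\<bar>"
    by (intro mult_right_mono mult_left_mono powr_mono2 semi_nonneg[OF hb] \<xi>(2)) (use a in auto)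
  also have "\<dots> = holder_semi a D * \<bar>u - t\<bar> powr (1 + a)"
    by (simp add: powr_add)
  finally show ?thesis .
qed

lemma BB_mean: assumes "1 \<le> l" "l \<le> M"
  shows "((\<lambda>u. u * BB M l u) has_integral real l / (real M + 1)) {0..1}"
proof -
  have "((\<lambda>u. real l / (real M + 1) * BB (Suc M) (Suc l) u) has_integral real l / (real M + 1) * 1) {0..1}"
    by (rule has_integral_mult_right[OF BB_int01]) (use assms in auto)
  moreover have "(\<lambda>u. u * BB M l u) = (\<lambda>u. real l / (real M + 1) * BB (Suc M) (Suc l) u)"
    using BB_shift[OF assms] by auto
  ultimately show ?thesis by simp
qed

lemma int_k:
  fixes \<nu> :: "real measure"
  assumes P: "prob_space \<nu>" and S: "sets \<nu> = sets borel" and m1: "measure \<nu> {0<..<1} = 1"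
  shows "integrable \<nu> (\<lambda>a. a^k * (1-a)^(M-k))"
proof -
  interpret prob_space \<nu> by (rule P)
  have AE01: "AE a in \<nu>. a \<in> {0<..<1}" by (rule AE_prob_1[OF m1])
  have meq: "borel_measurable \<nu> = borel_measurable borel" by (rule measurable_cong_sets[OF S refl])
  show ?thesis
  proof (rule integrable_const_bound[where B=1])
    show "AE a in \<nu>. norm (a^k*(1-a)^(M-k)) \<le> 1"
      using AE01
    proof eventually_elim
      fix a :: real assume a: "a \<in> {0<..<1}"
      have "a^k \<le> 1" "(1-a)^(M-k) \<le> 1" "0 \<le> a^k" "0 \<le> (1-a)^(M-k)" using a by (auto intro: power_le_one)
      then have "a^k*(1-a)^(M-k) \<le> 1" "0 \<le> a^k*(1-a)^(M-k)" by (auto intro: mult_le_one)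
      then show "norm (a^k*(1-a)^(M-k)) \<le> 1" by simp
    qed
    show "(\<lambda>a. a^k * (1-a)^(M-k)) \<in> borel_measurable \<nu>" unfolding meq by measurable
  qed
qed

theorem lemma6p3:
  fixes \<nu> :: "real measure" and \<gamma> :: real and M :: nat
  assumes "prob_space \<nu>"
    and "sets \<nu> = sets borel"
    and "measure \<nu> {0<..<1} = 1"
    and "0 < \<gamma>" and "\<gamma> \<le> 2"
    and "holder_space \<gamma> (cdf_of \<nu>)"
  shows "\<forall>l::nat. l \<le> M + 1 \<longrightarrow>
     \<bar>cdf_of \<nu> (real l / (real M + 1)) - FM \<nu> M (real l / (real M + 1))\<bar>
       \<le> holder_norm \<gamma> (cdf_of \<nu>) / (2 powr \<gamma> * (real M + 2) powr (\<gamma> / 2))"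
proof -
  note P = assms(1) and S = assms(2) and m1 = assms(3) and g = assms(4,5) and hs = assms(6)
  interpret prob_space \<nu> by (rule P)
  define F where "F = cdf_of \<nu>"
  have sp: "space \<nu> = UNIV" using sets_eq_imp_space_eq[OF S] by simp
  have Fnn: "0 \<le> F u" for u by (simp add: F_def cdf_of_def)
  have Kex: "\<exists>K. 0 \<le> K \<and> K \<le> holder_norm \<gamma> F \<and> continuous_on {0..1} F \<and>
     (\<forall>l. 1 \<le> l \<and> l \<le> M \<longrightarrow> (\<exists>R. continuous_on {0..1} R \<and>
        (\<forall>u\<in>{0..1}. \<bar>R u\<bar> \<le> K * \<bar>u - real l / (real M + 1)\<bar> powr \<gamma>) \<and>
        integral {0..1} (\<lambda>u. BB M l u * R u) =
          integral {0..1} (\<lambda>u. BB M l u * (F u - F (real l / (real M + 1))))))"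
  proof (cases "\<gamma> \<le> 1")
    case True
    then have Fc: "continuous_on {0..1} F" and hb: "holder_bdd \<gamma> F"
      using hs by (auto simp: holder_space_def F_def)
    have nrm: "holder_norm \<gamma> F = holder_semi \<gamma> F" using True by (simp add: holder_norm_def)
    show ?thesis
    proof (rule exI[where x="holder_semi \<gamma> F"], intro conjI allI impI)
      show "0 \<le> holder_semi \<gamma> F" by (rule semi_nonneg[OF hb])
      show "holder_semi \<gamma> F \<le> holder_norm \<gamma> F" using nrm by simp
      show "continuous_on {0..1} F" by (rule Fc)
      fix l assume l: "1 \<le> l \<and> l \<le> M"
      define t where "t = real l / (real M + 1)"
      have t01: "t \<in> {0..1}" using l by (simp add: t_def)
      show "\<exists>R. continuous_on {0..1} R \<and>
        (\<forall>u\<in>{0..1}. \<bar>R u\<bar> \<le> holder_semi \<gamma> F * \<bar>u - real l / (real M + 1)\<bar> powr \<gamma>) \<and>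
        integral {0..1} (\<lambda>u. BB M l u * R u) =
          integral {0..1} (\<lambda>u. BB M l u * (F u - F (real l / (real M + 1))))"
      proof (rule exI[where x="\<lambda>u. F u - F t"], intro conjI ballI)
        show "continuous_on {0..1} (\<lambda>u. F u - F t)"
          by (intro continuous_on_diff Fc continuous_on_const)
        fix u :: real assume u: "u \<in> {0..1}"
        show "\<bar>F u - F t\<bar> \<le> holder_semi \<gamma> F * \<bar>u - real l / (real M + 1)\<bar> powr \<gamma>"
          using holder_le[OF hb t01 u] by (simp add: t_def)
      qed (simp add: t_def)
    qed
  next
    case False
    obtain f' where C1: "C1_on_unit F f'" and hb': "holder_bdd (\<gamma> - 1) f'"
      using hs False by (auto simp: holder_space_def F_def)
    define D where "D = (SOME f'. C1_on_unit F f')"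
    have C1D: "C1_on_unit F D" unfolding D_def by (rule someI[where P="C1_on_unit F", OF C1])
    have Dd: "\<And>x. x \<in> {0..1} \<Longrightarrow> (F has_real_derivative D x) (at x within {0..1})"
      and Dc: "continuous_on {0..1} D" using C1D by (auto simp: C1_on_unit_def)
    have fd: "\<And>x. x \<in> {0..1} \<Longrightarrow> (F has_real_derivative f' x) (at x within {0..1})"
      using C1 by (auto simp: C1_on_unit_def)
    have eqD: "f' x = D x" if x: "x \<in> {0..1}" for x
    proof (rule vector_derivative_unique_within_closed_interval)
      show "(0::real) < 1" by simp
      show "x \<in> cbox 0 1" using x by (simp add: interval_cbox[symmetric])
      show "(F has_vector_derivative f' x) (at x within cbox 0 1)"
        using fd[OF x] by (simp add: interval_cbox[symmetric] has_real_derivative_iff_has_vector_derivative)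
      show "(F has_vector_derivative D x) (at x within cbox 0 1)"
        using Dd[OF x] by (simp add: interval_cbox[symmetric] has_real_derivative_iff_has_vector_derivative)
    qed
    have hb: "holder_bdd (\<gamma> - 1) D"
    proof -
      have "(\<lambda>(u, v). \<bar>D v - D u\<bar> / \<bar>v - u\<bar> powr (\<gamma> - 1)) ` unit_pairs
          = (\<lambda>(u, v). \<bar>f' v - f' u\<bar> / \<bar>v - u\<bar> powr (\<gamma> - 1)) ` unit_pairs"
        by (rule image_cong) (auto simp: unit_pairs_def eqD)
      then show ?thesis using hb' by (simp add: holder_bdd_def)
    qed
    have Fc: "continuous_on {0..1} F"
      unfolding continuous_on_eq_continuous_within using Dd DERIV_continuous by blast
    define K where "K = holder_semi (\<gamma> - 1) D"
    have K0: "0 \<le> K" unfolding K_def by (rule semi_nonneg[OF hb])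
    have SUP0: "0 \<le> (SUP x\<in>{0..1}. \<bar>D x\<bar>)"
    proof -
      have "compact ((\<lambda>x. \<bar>D x\<bar>) ` {0..1})"
        by (rule compact_continuous_image[OF continuous_on_rabs[OF Dc]]) simp
      then have "bdd_above ((\<lambda>x. \<bar>D x\<bar>) ` {0..1})"
        by (rule bounded_imp_bdd_above[OF compact_imp_bounded])
      then show ?thesis by (rule cSUP_upper2[of _ _ 0]) auto
    qed
    have nrm: "holder_norm \<gamma> F = (SUP x\<in>{0..1}. \<bar>D x\<bar>) + K"
      using False by (simp add: holder_norm_def D_def K_def Let_def)
    show ?thesis
    proof (rule exI[where x=K], intro conjI allI impI)
      show "0 \<le> K" by (rule K0)
      show "K \<le> holder_norm \<gamma> F" using nrm SUP0 by simp
      show "continuous_on {0..1} F" by (rule Fc)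
      fix l assume l: "1 \<le> l \<and> l \<le> M"
      define t where "t = real l / (real M + 1)"
      have t01: "t \<in> {0..1}" using l by (simp add: t_def)
      define R where "R u = F u - F t - D t * (u - t)" for u
      have Rc: "continuous_on {0..1} R" unfolding R_def
        by (intro continuous_on_diff Fc continuous_on_const continuous_on_mult continuous_on_id)
      have Rb: "\<bar>R u\<bar> \<le> K * \<bar>u - t\<bar> powr \<gamma>" if u: "u \<in> {0..1}" for u
      proof -
        have "\<bar>R u\<bar> \<le> K * \<bar>u - t\<bar> powr (1 + (\<gamma> - 1))"
          unfolding R_def K_def by (rule taylor1[OF Dd hb _ u t01]) (use False in auto)
        then show ?thesis by simp
      qed
      have hJ: "((\<lambda>u. BB M l u * (F u - F t)) has_integral integral {0..1} (\<lambda>u. BB M l u * (F u - F t))) {0..1}"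
        by (rule integrable_integral[OF integrable_continuous_interval])
          (intro continuous_on_mult BB_cont continuous_on_diff Fc continuous_on_const)
      have "((\<lambda>u. BB M l u * (F u - F t) - D t * (u * BB M l u - t * BB M l u)) has_integral
          (integral {0..1} (\<lambda>u. BB M l u * (F u - F t)) - D t * (t - t * 1))) {0..1}"
        by (intro has_integral_diff has_integral_mult_right hJ BB_int01 BB_mean[of l M, folded t_def])
          (use l in auto)
      moreover have "(\<lambda>u. BB M l u * (F u - F t) - D t * (u * BB M l u - t * BB M l u)) = (\<lambda>u. BB M l u * R u)"
        by (rule ext) (simp add: R_def algebra_simps)
      ultimately have "((\<lambda>u. BB M l u * R u) has_integral integral {0..1} (\<lambda>u. BB M l u * (F u - F t))) {0..1}"
        by simp
      then have Ieq: "integral {0..1} (\<lambda>u. BB M l u * R u) = integral {0..1} (\<lambda>u. BB M l u * (F u - F t))"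
        by (rule integral_unique)
      show "\<exists>R. continuous_on {0..1} R \<and>
        (\<forall>u\<in>{0..1}. \<bar>R u\<bar> \<le> K * \<bar>u - real l / (real M + 1)\<bar> powr \<gamma>) \<and>
        integral {0..1} (\<lambda>u. BB M l u * R u) =
          integral {0..1} (\<lambda>u. BB M l u * (F u - F (real l / (real M + 1))))"
        using Rc Rb Ieq unfolding t_def by blast
    qed
  qed
  then obtain K where K0: "0 \<le> K" and Kn: "K \<le> holder_norm \<gamma> F" and Fc: "continuous_on {0..1} F"
    and KR: "\<And>l. 1 \<le> l \<Longrightarrow> l \<le> M \<Longrightarrow> \<exists>R. continuous_on {0..1} R \<and>
        (\<forall>u\<in>{0..1}. \<bar>R u\<bar> \<le> K * \<bar>u - real l / (real M + 1)\<bar> powr \<gamma>) \<and>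
        integral {0..1} (\<lambda>u. BB M l u * R u) =
          integral {0..1} (\<lambda>u. BB M l u * (F u - F (real l / (real M + 1))))"
    by blast
  have den: "0 < 2 powr \<gamma> * (real M + 2) powr (\<gamma> / 2)" by simp
  have rhs0: "0 \<le> holder_norm \<gamma> F / (2 powr \<gamma> * (real M + 2) powr (\<gamma> / 2))"
    using K0 Kn den by simp
  have F0: "F 0 = 0"
  proof -
    have "measure \<nu> {..0} \<le> measure \<nu> (space \<nu> - {0<..<1})"
      by (rule finite_measure_mono) (auto simp: sp S)
    also have "\<dots> = 1 - measure \<nu> {0<..<1}" by (rule prob_compl) (simp add: S)
    finally have "measure \<nu> {..0} \<le> 0" using m1 by simp
    then show ?thesis using measure_nonneg[of \<nu> "{..0}"] unfolding F_def cdf_of_def by linarith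
  qed
  have F1: "F 1 = 1"
  proof -
    have "measure \<nu> {0<..<1} \<le> measure \<nu> {..1}"
      by (rule finite_measure_mono) (auto simp: S)
    then show ?thesis using m1 prob_le_1[of "{..1}"] by (simp add: F_def cdf_of_def)
  qed
  show ?thesis unfolding F_def[symmetric]
  proof (intro allI impI)
    fix l :: nat assume lM: "l \<le> M + 1"
    consider "l = 0" | "l = M + 1" | "1 \<le> l \<and> l \<le> M" using lM by linarith
    then show "\<bar>F (real l / (real M + 1)) - FM \<nu> M (real l / (real M + 1))\<bar>
       \<le> holder_norm \<gamma> F / (2 powr \<gamma> * (real M + 2) powr (\<gamma> / 2))"
    proof cases
      case 1
      then show ?thesis using F0 rhs0 by (simp add: FM_def)
    next
      case 2
      have q: "real l / (real M + 1) = 1" using 2 by simp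
      have fl: "nat \<lfloor>(real M + 1) * 1\<rfloor> = Suc M" by simp
      have "FM \<nu> M 1 = (\<Sum>k<Suc M. real (M choose k) * mom \<nu> k (M - k))"
        unfolding FM_def fl ..
      also have "\<dots> = (\<integral>a. (\<Sum>k<Suc M. real (M choose k) * (a^k * (1-a)^(M-k))) \<partial>\<nu>)"
      proof -
        have "(\<integral>a. (\<Sum>k<Suc M. real (M choose k) * (a^k * (1-a)^(M-k))) \<partial>\<nu>)
           = (\<Sum>k<Suc M. (\<integral>a. real (M choose k) * (a^k * (1-a)^(M-k)) \<partial>\<nu>))"
          by (rule Bochner_Integration.integral_sum) (simp add: int_k[OF P S m1])
        also have "\<dots> = (\<Sum>k<Suc M. real (M choose k) * mom \<nu> k (M - k))"
          by (rule sum.cong[OF refl]) (simp add: mom_def)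
        finally show ?thesis by simp
      qed
      also have "\<dots> = (\<integral>a. 1 \<partial>\<nu>)"
      proof (rule Bochner_Integration.integral_cong[OF refl])
        fix a :: real
        have "(\<Sum>k<Suc M. real (M choose k) * (a^k * (1-a)^(M-k))) = (a + (1 - a))^M"
          unfolding binomial_ring lessThan_Suc_atMost by (simp add: mult.assoc)
        then show "(\<Sum>k<Suc M. real (M choose k) * (a^k * (1-a)^(M-k))) = 1" by simp
      qed
      also have "\<dots> = 1" by (simp add: prob_space)
      finally show ?thesis using q F1 rhs0 by simp
    next
      case 3
      define t where "t = real l / (real M + 1)"
      obtain R where Rc: "continuous_on {0..1} R"
        and Rb: "\<forall>u\<in>{0..1}. \<bar>R u\<bar> \<le> K * \<bar>u - real l / (real M + 1)\<bar> powr \<gamma>"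
        and RI: "integral {0..1} (\<lambda>u. BB M l u * R u) = integral {0..1} (\<lambda>u. BB M l u * (F u - F t))"
        using KR[of l] 3 unfolding t_def by blast
      have FMe: "FM \<nu> M t = integral {0..1} (\<lambda>u. BB M l u * F u)"
        unfolding t_def F_def using FM_eq[OF P S m1 _ _ Fc[unfolded F_def]] 3 by simp
      have hF: "((\<lambda>u. BB M l u * F u) has_integral integral {0..1} (\<lambda>u. BB M l u * F u)) {0..1}"
        by (rule integrable_integral[OF integrable_continuous_interval[OF continuous_on_mult[OF BB_cont Fc]]])
      have "((\<lambda>u. BB M l u * F u - F t * BB M l u) has_integral (integral {0..1} (\<lambda>u. BB M l u * F u) - F t * 1)) {0..1}"
        by (intro has_integral_diff has_integral_mult_right hF BB_int01) (use 3 in auto)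
      moreover have "(\<lambda>u. BB M l u * F u - F t * BB M l u) = (\<lambda>u. BB M l u * (F u - F t))"
        by (rule ext) (simp add: algebra_simps)
      ultimately have "integral {0..1} (\<lambda>u. BB M l u * (F u - F t)) = FM \<nu> M t - F t"
        using FMe by (simp add: integral_unique)
      then have "\<bar>F t - FM \<nu> M t\<bar> = \<bar>integral {0..1} (\<lambda>u. BB M l u * R u)\<bar>"
        using RI by simp
      also have "\<dots> \<le> K / (2 powr \<gamma> * (real M + 2) powr (\<gamma>/2))"
        by (rule core) (use 3 g K0 Rc Rb in auto)
      also have "\<dots> \<le> holder_norm \<gamma> F / (2 powr \<gamma> * (real M + 2) powr (\<gamma> / 2))"
        by (rule divide_right_mono[OF Kn]) (use den in simp)
      finally show ?thesis unfolding t_def .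
    qed
  qed
qed

end
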